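(* Let $\mathbf{Z}=\{\mathbf{z}_i\}_{i=1}^n$ be a $G$-networked sample, $\mathbf{w}$ an optimal weighting of $G$ and $\mathsf{s}=\mathsf{s}(G)$. Let $M>0$ and let $f:\mathcal{X}\to\mathcal{Y}$ be $M$-bounded, i.e. $|f(\mathbf{x})-y|\le M$ for $\rho$-almost all $(\mathbf{x},y)$. Then for all $\epsilon>0$, $$\Pr\big(\mathcal{D}_{\mathbf{Z}_{\mathsf{s}}}(f)\ge-\epsilon\big)\ge1-\exp\Big(-\frac{\mathsf{s}\,\epsilon^2}{2M^4}\Big),$$ where $\mathcal{D}_{\mathbf{Z}_{\mathsf{s}}}(f)=\mathcal{E}(f)-\mathcal{E}_{\mathsf{s}}(f)$.
   Context: Networked setting: $G$ is a $k$-partite hypergraph with hyperedges $e_1,\dots,e_n$; vertex set partitioned into $V^{(1)},\dots,V^{(k)}$, each hyperedge containing exactly one vertex $e^{(j)}$ of each $V^{(j)}$. $\mathcal{X}=\mathcal{X}^{(1)}\times\cdots\times\mathcal{X}^{(k)}$ (compact metric spaces), $\mathcal{Y}=\mathbb{R}$, $\mathcal{Z}=\mathcal{X}\times\mathcal{Y}$. Each vertex $v\in V^{(j)}$ gets a feature $\phi(v)$ drawn independently from $\rho_j$, independently of the hypergraph. Hyperedge $e_i$ yields $\mathbf{z}_i=(\mathbf{x}_i,y_i)$, $\mathbf{x}_i=(\phi(e_i^{(1)}),\dots,\phi(e_i^{(k)}))$, labels conditionally independent given the features with $y_i\sim\rho_{y|\mathbf{x}}(\cdot\mid\mathbf{x}_i)$;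 $\rho=\rho_{y|\mathbf{x}}\rho_{\mathbf{x}}$ with $\rho_{\mathbf{x}}=\prod_j\rho_j$. A feasible weighting is $\mathbf{w}$ with $w_i\ge0$ and $\sum_{i:\,v\in e_i}w_i\le1$ for every vertex $v$; $\mathsf{s}(G)=\max\sum_i w_i$ over feasible weightings, attained by an optimal weighting. $\mathcal{E}(f)=\int_{\mathcal{Z}}(f(\mathbf{x})-y)^2d\rho$ and $\mathcal{E}_{\mathsf{s}}(f)=\frac1{\mathsf{s}}\sum_{i=1}^n w_i(f(\mathbf{x}_i)-y_i)^2$. *)

theory Defs
  imports "HOL-Probability.Probability"
begin

text \<open>
  A k-partite hypergraph with hyperedges indexed by i < n: the hyperedge i contains,
  for every part j < k, the vertex (j, edge i j).  Vertices of part j are tagged with j,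
  so the parts V^(j) = {(j,v)} are disjoint.
\<close>

definition feasible_weighting ::
  "nat \<Rightarrow> nat \<Rightarrow> (nat \<Rightarrow> nat \<Rightarrow> nat) \<Rightarrow> (nat \<Rightarrow> real) \<Rightarrow> bool" where
  "feasible_weighting k n edge w \<longleftrightarrow>
     (\<forall>i<n. 0 \<le> w i) \<and>
     (\<forall>j<k. \<forall>v. (\<Sum>i\<in>{i. i < n \<and> edge i j = v}. w i) \<le> 1)"

definition s_number :: "nat \<Rightarrow> nat \<Rightarrow> (nat \<Rightarrow> nat \<Rightarrow> nat) \<Rightarrow> real" where
  "s_number k n edge = Sup {(\<Sum>i<n. w i) | w. feasible_weighting k n edge w}"

definition optimal_weighting ::
  "nat \<Rightarrow> nat \<Rightarrow> (nat \<Rightarrow> nat \<Rightarrow> nat) \<Rightarrow> (nat \<Rightarrow> real) \<Rightarrow> bool" where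
  "optimal_weighting k n edge w \<longleftrightarrow>
     feasible_weighting k n edge w \<and> (\<Sum>i<n. w i) = s_number k n edge"

definition vset :: "nat \<Rightarrow> nat \<Rightarrow> (nat \<Rightarrow> nat \<Rightarrow> nat) \<Rightarrow> (nat \<times> nat) set" where
  "vset k n edge = {(j, edge i j) | i j. i < n \<and> j < k}"

definition feat_measure :: "nat \<Rightarrow> (nat \<Rightarrow> 'a measure) \<Rightarrow> (nat \<Rightarrow> 'a) measure" where
  "feat_measure k \<rho> = PiM {..<k} \<rho>"

text \<open>rho = rho_{y|x} rho_x on Z = X \<times> R; K is the conditional distribution kernel.\<close>
definition joint_measure ::
  "nat \<Rightarrow> (nat \<Rightarrow> 'a measure) \<Rightarrow> ((nat \<Rightarrow> 'a) \<Rightarrow> real measure) \<Rightarrow> ((nat \<Rightarrow> 'a) \<times> real) measure" where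
  "joint_measure k \<rho> K =
     bind (feat_measure k \<rho>)
       (\<lambda>x. bind (K x) (\<lambda>y. return (feat_measure k \<rho> \<Otimes>\<^sub>M borel) (x, y)))"

definition expected_risk ::
  "nat \<Rightarrow> (nat \<Rightarrow> 'a measure) \<Rightarrow> ((nat \<Rightarrow> 'a) \<Rightarrow> real measure) \<Rightarrow> ((nat \<Rightarrow> 'a) \<Rightarrow> real) \<Rightarrow> real" where
  "expected_risk k \<rho> K f = (\<integral>z. (f (fst z) - snd z)\<^sup>2 \<partial>joint_measure k \<rho> K)"

definition xvec :: "nat \<Rightarrow> (nat \<Rightarrow> nat \<Rightarrow> nat) \<Rightarrow> nat \<Rightarrow> (nat \<times> nat \<Rightarrow> 'a) \<Rightarrow> (nat \<Rightarrow> 'a)" where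
  "xvec k edge i \<Phi> = (\<lambda>j\<in>{..<k}. \<Phi> (j, edge i j))"

definition vertex_feat_measure ::
  "nat \<Rightarrow> nat \<Rightarrow> (nat \<Rightarrow> nat \<Rightarrow> nat) \<Rightarrow> (nat \<Rightarrow> 'a measure) \<Rightarrow> (nat \<times> nat \<Rightarrow> 'a) measure" where
  "vertex_feat_measure k n edge \<rho> = PiM (vset k n edge) (\<lambda>jv. \<rho> (fst jv))"

text \<open>Distribution of a G-networked sample: independent vertex features phi(v) ~ rho_j for
  v in V^(j); given the features, labels y_i ~ K(x_i) independently.  An outcome is the pair
  (Phi, Y) of all vertex features and all labels; z_i = (xvec i Phi, Y i).\<close>
definition sample_measure ::
  "nat \<Rightarrow> nat \<Rightarrow> (nat \<Rightarrow> nat \<Rightarrow> nat) \<Rightarrow> (nat \<Rightarrow> 'a measure) \<Rightarrow> ((nat \<Rightarrow> 'a) \<Rightarrow> real measure)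
     \<Rightarrow> ((nat \<times> nat \<Rightarrow> 'a) \<times> (nat \<Rightarrow> real)) measure" where
  "sample_measure k n edge \<rho> K =
     bind (vertex_feat_measure k n edge \<rho>)
       (\<lambda>\<Phi>. bind (PiM {..<n} (\<lambda>i. K (xvec k edge i \<Phi>)))
         (\<lambda>Y. return (vertex_feat_measure k n edge \<rho> \<Otimes>\<^sub>M PiM {..<n} (\<lambda>_. borel)) (\<Phi>, Y)))"

definition weighted_emp_risk ::
  "nat \<Rightarrow> nat \<Rightarrow> (nat \<Rightarrow> nat \<Rightarrow> nat) \<Rightarrow> (nat \<Rightarrow> real) \<Rightarrow> ((nat \<Rightarrow> 'a) \<Rightarrow> real)
     \<Rightarrow> (nat \<times> nat \<Rightarrow> 'a) \<times> (nat \<Rightarrow> real) \<Rightarrow> real" where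
  "weighted_emp_risk k n edge w f \<omega> =
     (1 / s_number k n edge) * (\<Sum>i<n. w i * (f (xvec k edge i (fst \<omega>)) - snd \<omega> i)\<^sup>2)"

end

theory Submission
  imports Defs
begin

lemma amgm:
  fixes a p :: "'i \<Rightarrow> real"
  assumes fin: "finite I" and a: "\<And>i. i \<in> I \<Longrightarrow> 0 \<le> a i" and p: "\<And>i. i \<in> I \<Longrightarrow> 0 < p i"
    and ps: "sum p I \<le> 1"
  shows "(\<Prod>i\<in>I. a i powr p i) \<le> (\<Sum>i\<in>I. p i * a i) + (1 - sum p I)"
proof (cases "\<exists>i\<in>I. a i = 0")
  case True
  then have "(\<Prod>i\<in>I. a i powr p i) = 0" using fin by (auto intro: prod_zero)
  moreover have "0 \<le> (\<Sum>i\<in>I. p i * a i)" using a p by (intro sum_nonneg mult_nonneg_nonneg) (auto intro: less_imp_le)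
  ultimately show ?thesis using ps by simp
next
  case False
  then have apos: "\<And>i. i \<in> I \<Longrightarrow> 0 < a i" using a by force
  define S where "S = insert None (Some ` I)"
  define q where "q = (\<lambda>x. case x of None \<Rightarrow> 1 - sum p I | Some i \<Rightarrow> p i)"
  define y where "y = (\<lambda>x. case x of None \<Rightarrow> 0 | Some i \<Rightarrow> ln (a i))"
  have sumS: "\<And>h. (\<Sum>x\<in>S. h x) = h None + (\<Sum>i\<in>I. h (Some i))"
    unfolding S_def using fin by (subst sum.insert) (auto simp: sum.reindex)
  have "exp (\<Sum>x\<in>S. q x *\<^sub>R y x) \<le> (\<Sum>x\<in>S. q x * exp (y x))"
  proof (rule convex_on_sum[OF _ _ exp_convex])
    show "finite S" using fin by (simp add: S_def)
    show "S \<noteq> {}" by (simp add: S_def)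
    show "sum q S = 1" by (simp add: sumS q_def)
    show "\<And>i. i \<in> S \<Longrightarrow> 0 \<le> q i" using p ps by (auto simp: S_def q_def intro: less_imp_le)
  qed auto
  moreover have "exp (\<Sum>x\<in>S. q x *\<^sub>R y x) = (\<Prod>i\<in>I. a i powr p i)"
    using apos by (simp add: sumS q_def y_def exp_sum fin powr_def mult.commute less_imp_neq[symmetric] cong: prod.cong)
  moreover have "(\<Sum>x\<in>S. q x * exp (y x)) = (\<Sum>i\<in>I. p i * a i) + (1 - sum p I)"
    by (simp add: sumS q_def y_def apos)
  ultimately show ?thesis by simp
qed

lemma powr_rescale: "0 < (c::real) \<Longrightarrow> 0 \<le> r \<Longrightarrow> r powr p = c powr p * (r / c) powr p"
  using powr_mult[of c "r / c" p] by simp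

definition epow :: "ennreal \<Rightarrow> real \<Rightarrow> ennreal" where
  "epow x p = (if x = \<top> then \<top> else ennreal (enn2real x powr p))"

lemma epow_ennreal: "0 \<le> a \<Longrightarrow> epow (ennreal a) p = ennreal (a powr p)"
  by (simp add: epow_def)

lemma epow_0: "epow 0 p = 0"
  by (simp add: epow_def)

lemma epow_top: "epow \<top> p = \<top>"
  by (simp add: epow_def)

lemma epow_pos: "x \<noteq> 0 \<Longrightarrow> epow x p \<noteq> 0"
  by (cases x) (auto simp: epow_def)

lemma measurable_epow[measurable]:
  assumes [measurable]: "g \<in> borel_measurable N"
  shows "(\<lambda>x. epow (g x) p) \<in> borel_measurable N"
  unfolding epow_def by measurable

lemma epow_mono: "x \<le> y \<Longrightarrow> 0 \<le> p \<Longrightarrow> epow x p \<le> epow y p"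
  apply (cases "y = \<top>")
   apply (simp add: epow_def)
  apply (cases x; cases y)
  apply (auto simp: epow_def top_unique intro!: ennreal_leI powr_mono2)
  done


lemma holder_gen:
  fixes g :: "'i \<Rightarrow> 'a \<Rightarrow> ennreal"
  assumes N: "prob_space N" and fin: "finite I" and p: "\<And>i. i \<in> I \<Longrightarrow> 0 < p i"
    and ps: "sum p I \<le> 1"
    and g[measurable]: "\<And>i. i \<in> I \<Longrightarrow> g i \<in> borel_measurable N"
  shows "(\<integral>\<^sup>+x. (\<Prod>i\<in>I. epow (g i x) (p i)) \<partial>N) \<le> (\<Prod>i\<in>I. epow (\<integral>\<^sup>+x. g i x \<partial>N) (p i))"
proof -
  interpret prob_space N by (rule N)
  define a where "a i = (\<integral>\<^sup>+x. g i x \<partial>N)" for i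
  show ?thesis
  proof (cases "\<exists>j\<in>I. a j = 0")
    case True
    then obtain j where j: "j \<in> I" "a j = 0" by blast
    then have "AE x in N. g j x = 0" using g[OF j(1)] by (simp add: a_def nn_integral_0_iff_AE)
    then have "AE x in N. (\<Prod>i\<in>I. epow (g i x) (p i)) = 0"
      by eventually_elim (use j fin in \<open>auto simp: epow_0 intro!: prod_zero bexI[of _ j]\<close>)
    then have "(\<integral>\<^sup>+x. (\<Prod>i\<in>I. epow (g i x) (p i)) \<partial>N) = (\<integral>\<^sup>+x. 0 \<partial>N)"
      by (intro nn_integral_cong_AE) auto
    then show ?thesis by simp
  next
    case False
    note nz = False
    show ?thesis
    proof (cases "\<exists>j\<in>I. a j = \<top>")
      case True
      then have "(\<Prod>i\<in>I. epow (a i) (p i)) = \<top>"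
        using nz fin by (subst ennreal_prod_eq_top) (metis epow_pos epow_top)
      then show ?thesis by (simp add: a_def)
    next
      case False
      define c where "c i = enn2real (a i)" for i
      have ac: "\<And>i. i \<in> I \<Longrightarrow> a i = ennreal (c i)" using False by (auto simp: c_def less_top)
      have cpos: "\<And>i. i \<in> I \<Longrightarrow> 0 < c i" using nz ac
        by (metis ennreal_0 enn2real_nonneg c_def order_le_less)
      define C where "C = (\<Prod>i\<in>I. c i powr p i)"
      have Cpos: "0 < C" unfolding C_def using cpos by (intro prod_pos) (metis less_irrefl powr_gt_zero)
      define P where "P = sum p I"
      have pw: "(\<Prod>i\<in>I. epow (g i x) (p i))
          \<le> ennreal C * ((\<Sum>i\<in>I. ennreal (p i / c i) * g i x) + ennreal (1 - P))" for x
      proof (cases "\<exists>i\<in>I. g i x = \<top>")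
        case True
        then obtain i where i: "i \<in> I" "g i x = \<top>" by blast
        have "ennreal (p i / c i) * g i x = \<top>"
          using i p[OF i(1)] cpos[OF i(1)] by (simp add: ennreal_mult_top)
        moreover have "ennreal (p i / c i) * g i x \<le> (\<Sum>i\<in>I. ennreal (p i / c i) * g i x)"
          using i fin by (intro member_le_sum) auto
        ultimately have "(\<Sum>i\<in>I. ennreal (p i / c i) * g i x) = \<top>" by (simp add: top_unique)
        then show ?thesis using Cpos by (simp add: ennreal_mult_top)
      next
        case False
        define r where "r i = enn2real (g i x)" for i
        have gr: "\<And>i. i \<in> I \<Longrightarrow> g i x = ennreal (r i)" using False by (auto simp: r_def less_top)
        have r0: "\<And>i. 0 \<le> r i" by (simp add: r_def)
        have "(\<Prod>i\<in>I. epow (g i x) (p i)) = ennreal (\<Prod>i\<in>I. r i powr p i)"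
          using r0 by (simp add: gr epow_ennreal prod_ennreal cong: prod.cong)
        also have "(\<Prod>i\<in>I. r i powr p i) = C * (\<Prod>i\<in>I. (r i / c i) powr p i)"
          unfolding C_def prod.distrib[symmetric]
          using cpos r0 by (intro prod.cong refl) (auto simp: powr_rescale)
        also have "\<dots> \<le> C * ((\<Sum>i\<in>I. p i * (r i / c i)) + (1 - P))"
          using Cpos cpos r0 p ps unfolding P_def
          by (intro mult_left_mono amgm fin) (auto intro: divide_nonneg_pos less_imp_le)
        also have "(\<Sum>i\<in>I. p i * (r i / c i)) = (\<Sum>i\<in>I. p i / c i * r i)" by (simp add: field_simps)
        finally have "(\<Prod>i\<in>I. epow (g i x) (p i)) \<le> ennreal (C * ((\<Sum>i\<in>I. p i / c i * r i) + (1 - P)))"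
          by (simp add: ennreal_leI)
        also have "\<dots> = ennreal C * ((\<Sum>i\<in>I. ennreal (p i / c i) * g i x) + ennreal (1 - P))"
        proof -
          have nn: "\<And>i. i \<in> I \<Longrightarrow> 0 \<le> p i / c i * r i"
            using cpos p r0 by (intro mult_nonneg_nonneg divide_nonneg_pos) (auto intro: less_imp_le)
          have s0: "0 \<le> (\<Sum>i\<in>I. p i / c i * r i)" using nn by (intro sum_nonneg) auto
          have P1: "0 \<le> 1 - P" using ps by (simp add: P_def)
          have e1: "(\<Sum>i\<in>I. ennreal (p i / c i) * g i x) = (\<Sum>i\<in>I. ennreal (p i / c i * r i))"
            using cpos p r0 by (intro sum.cong refl) (simp only: gr, subst ennreal_mult[symmetric], auto intro: divide_nonneg_pos less_imp_le)
          have e2: "(\<Sum>i\<in>I. ennreal (p i / c i * r i)) = ennreal (\<Sum>i\<in>I. p i / c i * r i)"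
            using nn by (rule sum_ennreal)
          show ?thesis unfolding e1 e2
            using s0 P1 Cpos by (simp add: ennreal_mult)
        qed
        finally show ?thesis .
      qed
      have "(\<integral>\<^sup>+x. (\<Prod>i\<in>I. epow (g i x) (p i)) \<partial>N)
          \<le> (\<integral>\<^sup>+x. ennreal C * ((\<Sum>i\<in>I. ennreal (p i / c i) * g i x) + ennreal (1 - P)) \<partial>N)"
        by (intro nn_integral_mono pw)
      also have "\<dots> = ennreal C * ((\<Sum>i\<in>I. ennreal (p i / c i) * a i) + ennreal (1 - P))"
        by (simp add: nn_integral_cmult nn_integral_add nn_integral_sum emeasure_space_1 a_def)
      also have "(\<Sum>i\<in>I. ennreal (p i / c i) * a i) = ennreal P"
      proof -
        have "(\<Sum>i\<in>I. ennreal (p i / c i) * a i) = (\<Sum>i\<in>I. ennreal (p i))"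
        proof (intro sum.cong refl)
          fix i assume i: "i \<in> I"
          have "ennreal (p i / c i) * ennreal (c i) = ennreal (p i / c i * c i)"
            using cpos[OF i] p[OF i] by (subst ennreal_mult) auto
          then show "ennreal (p i / c i) * a i = ennreal (p i)" using cpos[OF i] by (simp add: ac[OF i])
        qed
        also have "\<dots> = ennreal P" unfolding P_def using p by (subst sum_ennreal) (auto intro: less_imp_le)
        finally show ?thesis .
      qed
      also have "ennreal C * (ennreal P + ennreal (1 - P)) = ennreal C"
        using ps p unfolding P_def by (simp add: ennreal_plus[symmetric] sum_nonneg less_imp_le del: ennreal_plus)
      also have "ennreal C = (\<Prod>i\<in>I. epow (a i) (p i))"
        unfolding C_def using cpos by (simp add: ac epow_ennreal prod_ennreal less_imp_le cong: prod.cong)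
      finally show ?thesis by (simp add: a_def)
    qed
  qed
qed

lemma finner:
  fixes M :: "'v \<Rightarrow> 'b measure" and g :: "'i \<Rightarrow> ('v \<Rightarrow> 'b) \<Rightarrow> ennreal" and e :: "'i \<Rightarrow> 'v set"
  assumes M: "\<And>v. prob_space (M v)" and V: "finite V" and I: "finite I"
    and p: "\<And>i. i \<in> I \<Longrightarrow> 0 < p i"
    and load: "\<And>v. v \<in> V \<Longrightarrow> (\<Sum>i\<in>{i\<in>I. v \<in> e i}. p i) \<le> 1"
    and g: "\<And>i. i \<in> I \<Longrightarrow> g i \<in> borel_measurable (PiM V M)"
    and dep: "\<And>i x y. i \<in> I \<Longrightarrow> x \<in> space (PiM V M) \<Longrightarrow> y \<in> space (PiM V M) \<Longrightarrow>
                 (\<And>u. u \<in> e i \<Longrightarrow> x u = y u) \<Longrightarrow> g i x = g i y"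
  shows "(\<integral>\<^sup>+x. (\<Prod>i\<in>I. epow (g i x) (p i)) \<partial>PiM V M) \<le> (\<Prod>i\<in>I. epow (\<integral>\<^sup>+x. g i x \<partial>PiM V M) (p i))"
  using V load g dep
proof (induction V arbitrary: g e rule: finite_induct)
  case empty
  show ?case by (simp add: PiM_empty nn_integral_count_space_finite)
next
  case (insert v V)
  interpret product_sigma_finite M
    by (simp add: product_sigma_finite_def M prob_space_imp_sigma_finite)
  interpret Mv: prob_space "M v" by (rule M)
  note gm[measurable] = insert.prems(2)
  define G where "G i x = (\<integral>\<^sup>+y. g i (x(v:=y)) \<partial>M v)" for i x
  define e' where "e' i = e i - {v}" for i
  have upd_space: "x(v:=z) \<in> space (PiM (insert v V) M)" if "x \<in> space (PiM V M)" "z \<in> space (M v)" for x z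
    using that by (auto simp: space_PiM intro!: PiE_fun_upd)
  have Gm: "G i \<in> borel_measurable (PiM V M)" if i: "i \<in> I" for i
  proof -
    have "(\<lambda>(x, y). g i (x(v := y))) \<in> borel_measurable (PiM V M \<Otimes>\<^sub>M M v)"
      using measurable_comp[OF measurable_add_dim gm[OF i]] by (simp add: comp_def case_prod_beta')
    then show ?thesis unfolding G_def by (rule sigma_finite_measure.borel_measurable_nn_integral[OF prob_space_imp_sigma_finite[OF M]])
  qed
  have Gdep: "G i x = G i y" if "i \<in> I" "x \<in> space (PiM V M)" "y \<in> space (PiM V M)"
    "\<And>u. u \<in> e' i \<Longrightarrow> x u = y u" for i x y
    unfolding G_def
  proof (intro nn_integral_cong)
    fix z assume "z \<in> space (M v)"
    then have h: "x(v:=z) \<in> space (PiM (insert v V) M)" "y(v:=z) \<in> space (PiM (insert v V) M)"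
      using that upd_space by auto
    show "g i (x(v := z)) = g i (y(v := z))"
      by (rule insert.prems(3)[OF that(1) h]) (use that in \<open>auto simp: e'_def\<close>)
  qed
  have load': "(\<Sum>i\<in>{i\<in>I. u \<in> e' i}. p i) \<le> 1" if "u \<in> V" for u
  proof -
    have "{i\<in>I. u \<in> e' i} = {i\<in>I. u \<in> e i}" using that insert.hyps by (auto simp: e'_def)
    then show ?thesis using insert.prems(1)[of u] that by simp
  qed
  have IH: "(\<integral>\<^sup>+x. (\<Prod>i\<in>I. epow (G i x) (p i)) \<partial>PiM V M) \<le> (\<Prod>i\<in>I. epow (\<integral>\<^sup>+x. G i x \<partial>PiM V M) (p i))"
    by (rule insert.IH[of e' G]) (auto intro: load' Gm Gdep)
  have intG: "(\<integral>\<^sup>+x. G i x \<partial>PiM V M) = (\<integral>\<^sup>+x. g i x \<partial>PiM (insert v V) M)" if i: "i \<in> I" for i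
    unfolding G_def using insert.hyps gm[OF i] by (intro product_nn_integral_insert[symmetric]) auto
  define B where "B = {i. v \<in> e i}"
  have pw: "(\<integral>\<^sup>+y. (\<Prod>i\<in>I. epow (g i (x(v:=y))) (p i)) \<partial>M v) \<le> (\<Prod>i\<in>I. epow (G i x) (p i))"
    if x: "x \<in> space (PiM V M)" for x
  proof -
    have const: "g i (x(v:=y)) = G i x" if i: "i \<in> I - B" and y: "y \<in> space (M v)" for i y
    proof -
      have "G i x = (\<integral>\<^sup>+y'. g i (x(v:=y)) \<partial>M v)"
        unfolding G_def
      proof (intro nn_integral_cong)
        fix z assume "z \<in> space (M v)"
        then have h: "x(v:=z) \<in> space (PiM (insert v V) M)" "x(v:=y) \<in> space (PiM (insert v V) M)"
          using x y upd_space by auto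
        show "g i (x(v := z)) = g i (x(v := y))"
          by (rule insert.prems(3)[OF _ h]) (use i in \<open>auto simp: B_def\<close>)
      qed
      then show ?thesis by (simp add: Mv.emeasure_space_1)
    qed
    have mI1: "(\<lambda>y. g i (x(v:=y))) \<in> borel_measurable (M v)" if "i \<in> I" for i
      using measurable_comp[OF measurable_component_update[OF x insert.hyps(2)] gm[OF that]]
      by (simp add: comp_def)
    have "(\<integral>\<^sup>+y. (\<Prod>i\<in>I. epow (g i (x(v:=y))) (p i)) \<partial>M v)
        = (\<integral>\<^sup>+y. (\<Prod>i\<in>I \<inter> B. epow (g i (x(v:=y))) (p i)) * (\<Prod>i\<in>I - B. epow (G i x) (p i)) \<partial>M v)"
    proof (intro nn_integral_cong)
      fix y assume y: "y \<in> space (M v)"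
      show "(\<Prod>i\<in>I. epow (g i (x(v:=y))) (p i))
          = (\<Prod>i\<in>I \<inter> B. epow (g i (x(v:=y))) (p i)) * (\<Prod>i\<in>I - B. epow (G i x) (p i))"
      proof -
        have "(\<Prod>i\<in>I - B. epow (g i (x(v:=y))) (p i)) = (\<Prod>i\<in>I - B. epow (G i x) (p i))"
          using const[OF _ y] by (intro prod.cong refl) simp
        then show ?thesis using I prod.Int_Diff[of I "\<lambda>i. epow (g i (x(v:=y))) (p i)" B] by metis
      qed
    qed
    also have "\<dots> = (\<integral>\<^sup>+y. (\<Prod>i\<in>I \<inter> B. epow (g i (x(v:=y))) (p i)) \<partial>M v) * (\<Prod>i\<in>I - B. epow (G i x) (p i))"
      using mI1 by (intro nn_integral_multc borel_measurable_prod_ennreal measurable_epow) auto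
    also have "\<dots> \<le> (\<Prod>i\<in>I \<inter> B. epow (G i x) (p i)) * (\<Prod>i\<in>I - B. epow (G i x) (p i))"
    proof (intro mult_right_mono)
      have "I \<inter> B = {i\<in>I. v \<in> e i}" by (auto simp: B_def)
      then have "sum p (I \<inter> B) \<le> 1" using insert.prems(1)[of v] by simp
      then show "(\<integral>\<^sup>+y. (\<Prod>i\<in>I \<inter> B. epow (g i (x(v:=y))) (p i)) \<partial>M v) \<le> (\<Prod>i\<in>I \<inter> B. epow (G i x) (p i))"
        unfolding G_def using I p mI1 by (intro holder_gen M) auto
    qed simp
    also have "\<dots> = (\<Prod>i\<in>I. epow (G i x) (p i))"
      using I by (subst (2) prod.Int_Diff[of _ _ B]) simp_all
    finally show ?thesis .
  qed
  have "(\<integral>\<^sup>+x. (\<Prod>i\<in>I. epow (g i x) (p i)) \<partial>PiM (insert v V) M)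
      = (\<integral>\<^sup>+x. (\<integral>\<^sup>+y. (\<Prod>i\<in>I. epow (g i (x(v:=y))) (p i)) \<partial>M v) \<partial>PiM V M)"
    using insert.hyps by (intro product_nn_integral_insert) measurable
  also have "\<dots> \<le> (\<integral>\<^sup>+x. (\<Prod>i\<in>I. epow (G i x) (p i)) \<partial>PiM V M)"
    by (intro nn_integral_mono pw)
  also have "\<dots> \<le> (\<Prod>i\<in>I. epow (\<integral>\<^sup>+x. G i x \<partial>PiM V M) (p i))" by (rule IH)
  also have "\<dots> = (\<Prod>i\<in>I. epow (\<integral>\<^sup>+x. g i x \<partial>PiM (insert v V) M) (p i))"
    by (intro prod.cong refl) (simp add: intG)
  finally show ?case .
qed

lemma nn_integral_PiM_prod':
  assumes I: "finite I" and M: "\<And>i. i \<in> I \<Longrightarrow> prob_space (M i)"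
    and f: "\<And>i. i \<in> I \<Longrightarrow> f i \<in> borel_measurable (M i)"
  shows "(\<integral>\<^sup>+x. (\<Prod>i\<in>I. f i (x i)) \<partial>PiM I M) = (\<Prod>i\<in>I. \<integral>\<^sup>+y. f i y \<partial>M i)"
proof -
  let ?M = "\<lambda>i. if i \<in> I then M i else count_space {undefined}"
  interpret M': prob_space "?M i" for i
    using M by (cases "i \<in> I") (auto intro!: prob_spaceI)
  interpret P: product_prob_space ?M I
    by unfold_locales
  have eq: "PiM I M = PiM I ?M" by (rule PiM_cong) auto
  have "(\<integral>\<^sup>+x. (\<Prod>i\<in>I. f i (x i)) \<partial>PiM I ?M) = (\<Prod>i\<in>I. \<integral>\<^sup>+y. f i y \<partial>?M i)"
    using I f by (intro P.product_nn_integral_prod) auto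
  also have "(\<Prod>i\<in>I. \<integral>\<^sup>+y. f i y \<partial>?M i) = (\<Prod>i\<in>I. \<integral>\<^sup>+y. f i y \<partial>M i)"
    by (intro prod.cong refl) simp
  finally show ?thesis unfolding eq .
qed

lemma measurable_PiM_kernel:
  assumes I: "finite I" and N: "\<And>i. i \<in> I \<Longrightarrow> N i \<in> X \<rightarrow>\<^sub>M prob_algebra B"
  shows "(\<lambda>x. PiM I (\<lambda>i. N i x)) \<in> X \<rightarrow>\<^sub>M prob_algebra (PiM I (\<lambda>_. B))"
proof (rule measurable_prob_algebra_generated[OF sets_PiM Int_stable_prod_algebra prod_algebra_sets_into_space])
  fix a assume a: "a \<in> space X"
  have Na: "prob_space (N i a)" "sets (N i a) = sets B" if "i \<in> I" for i
    using measurable_space[OF N[OF that] a] unfolding space_prob_algebra mem_Collect_eq by blast+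
  show "prob_space (PiM I (\<lambda>i. N i a))" by (rule prob_space_PiM) (rule Na)
  show "sets (PiM I (\<lambda>i. N i a)) = sets (PiM I (\<lambda>_. B))" using Na by (intro sets_PiM_cong) auto
next
  fix A assume "A \<in> prod_algebra I (\<lambda>_. B)"
  then have "A \<in> {PiE I X |X. X \<in> (\<Pi> j\<in>I. sets B)}"
    by (simp only: prod_algebra_eq_finite[OF I, of "\<lambda>_. B"])
  then obtain Y where A: "A = PiE I Y" and Y: "Y \<in> (\<Pi> j\<in>I. sets B)"
    by (auto simp del: PiE_eq_empty_iff Pi_iff)
  have "(\<lambda>a. emeasure (PiM I (\<lambda>i. N i a)) A) \<in> borel_measurable X
      \<longleftrightarrow> (\<lambda>a. \<Prod>i\<in>I. emeasure (N i a) (Y i)) \<in> borel_measurable X"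
  proof (rule measurable_cong)
    fix a assume a: "a \<in> space X"
    have Na: "prob_space (N i a)" "sets (N i a) = sets B" if "i \<in> I" for i
      using measurable_space[OF N[OF that] a] unfolding space_prob_algebra mem_Collect_eq by blast+
    have "emeasure (PiM I (\<lambda>i. N i a)) (prod_emb I (\<lambda>i. N i a) I (PiE I Y)) = (\<Prod>i\<in>I. emeasure (N i a) (Y i))"
      using Na Y I by (intro emeasure_PiM_emb) auto
    moreover have "prod_emb I (\<lambda>i. N i a) I (PiE I Y) = PiE I Y"
    proof (rule prod_emb_PiE_same_index)
      fix i assume i: "i \<in> I"
      then have "Y i \<in> sets (N i a)" using Y Na(2)[OF i] by auto
      then show "Y i \<subseteq> space (N i a)" by (rule sets.sets_into_space)
    qed
    ultimately show "emeasure (PiM I (\<lambda>i. N i a)) A = (\<Prod>i\<in>I. emeasure (N i a) (Y i))" by (simp add: A)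
  qed
  moreover have "(\<lambda>a. \<Prod>i\<in>I. emeasure (N i a) (Y i)) \<in> borel_measurable X"
    using Y by (intro borel_measurable_prod_ennreal measurable_compose[OF measurable_prob_algebraD[OF N] measurable_emeasure_subprob_algebra]) auto
  ultimately show "(\<lambda>a. emeasure (PiM I (\<lambda>i. N i a)) A) \<in> borel_measurable X" by simp
qed

lemma nn_integral_bind_pair:
  assumes N: "N \<in> M \<rightarrow>\<^sub>M prob_algebra B" and h[measurable]: "h \<in> borel_measurable (M \<Otimes>\<^sub>M B)"
  shows "(\<integral>\<^sup>+z. h z \<partial>(M \<bind> (\<lambda>x. N x \<bind> (\<lambda>y. return (M \<Otimes>\<^sub>M B) (x, y)))))
       = (\<integral>\<^sup>+x. \<integral>\<^sup>+y. h (x, y) \<partial>N x \<partial>M)"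
proof -
  have ret: "(\<lambda>(x, y). return (M \<Otimes>\<^sub>M B) (x, y)) \<in> M \<Otimes>\<^sub>M B \<rightarrow>\<^sub>M prob_algebra (M \<Otimes>\<^sub>M B)"
    using measurable_return_prob_space[of "M \<Otimes>\<^sub>M B"] by (simp add: case_prod_beta')
  have inner: "(\<lambda>x. N x \<bind> (\<lambda>y. return (M \<Otimes>\<^sub>M B) (x, y))) \<in> M \<rightarrow>\<^sub>M prob_algebra (M \<Otimes>\<^sub>M B)"
    by (rule measurable_bind_prob_space2[OF N ret])
  have "(\<integral>\<^sup>+z. h z \<partial>(M \<bind> (\<lambda>x. N x \<bind> (\<lambda>y. return (M \<Otimes>\<^sub>M B) (x, y)))))
      = (\<integral>\<^sup>+x. \<integral>\<^sup>+z. h z \<partial>(N x \<bind> (\<lambda>y. return (M \<Otimes>\<^sub>M B) (x, y))) \<partial>M)"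
    by (rule nn_integral_bind[OF h measurable_prob_algebraD[OF inner]])
  also have "\<dots> = (\<integral>\<^sup>+x. \<integral>\<^sup>+y. h (x, y) \<partial>N x \<partial>M)"
  proof (rule nn_integral_cong)
    fix x assume x: "x \<in> space M"
    have Nx: "sets (N x) = sets B"
      using measurable_space[OF N x] by (simp add: space_prob_algebra)
    have r: "(\<lambda>y. return (M \<Otimes>\<^sub>M B) (x, y)) \<in> N x \<rightarrow>\<^sub>M subprob_algebra (M \<Otimes>\<^sub>M B)"
      using measurable_compose[OF measurable_Pair1'[OF x] return_measurable]
      by (simp add: measurable_cong_sets[OF Nx refl] comp_def)
    have "(\<integral>\<^sup>+z. h z \<partial>(N x \<bind> (\<lambda>y. return (M \<Otimes>\<^sub>M B) (x, y))))
        = (\<integral>\<^sup>+y. \<integral>\<^sup>+z. h z \<partial>return (M \<Otimes>\<^sub>M B) (x, y) \<partial>N x)"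
      by (rule nn_integral_bind[OF h r])
    also have "\<dots> = (\<integral>\<^sup>+y. h (x, y) \<partial>N x)"
    proof (rule nn_integral_cong)
      fix y assume "y \<in> space (N x)"
      then have "(x, y) \<in> space (M \<Otimes>\<^sub>M B)" using x sets_eq_imp_space_eq[OF Nx] by (simp add: space_pair_measure)
      then show "(\<integral>\<^sup>+z. h z \<partial>return (M \<Otimes>\<^sub>M B) (x, y)) = h (x, y)"
        by (rule nn_integral_return) simp
    qed
    finally show "(\<integral>\<^sup>+z. h z \<partial>(N x \<bind> (\<lambda>y. return (M \<Otimes>\<^sub>M B) (x, y)))) = (\<integral>\<^sup>+y. h (x, y) \<partial>N x)" .
  qed
  finally show ?thesis .
qed

lemma prob_space_bind_pair:
  assumes N: "N \<in> M \<rightarrow>\<^sub>M prob_algebra B" and M: "prob_space M"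
  shows "prob_space (M \<bind> (\<lambda>x. N x \<bind> (\<lambda>y. return (M \<Otimes>\<^sub>M B) (x, y))))"
    and "sets (M \<bind> (\<lambda>x. N x \<bind> (\<lambda>y. return (M \<Otimes>\<^sub>M B) (x, y)))) = sets (M \<Otimes>\<^sub>M B)"
proof -
  have ret: "(\<lambda>(x, y). return (M \<Otimes>\<^sub>M B) (x, y)) \<in> M \<Otimes>\<^sub>M B \<rightarrow>\<^sub>M prob_algebra (M \<Otimes>\<^sub>M B)"
    using measurable_return_prob_space[of "M \<Otimes>\<^sub>M B"] by (simp add: case_prod_beta')
  have inner: "(\<lambda>x. N x \<bind> (\<lambda>y. return (M \<Otimes>\<^sub>M B) (x, y))) \<in> M \<rightarrow>\<^sub>M prob_algebra (M \<Otimes>\<^sub>M B)"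
    by (rule measurable_bind_prob_space2[OF N ret])
  have Ms: "M \<in> space (prob_algebra M)" using M by (simp add: space_prob_algebra)
  show "prob_space (M \<bind> (\<lambda>x. N x \<bind> (\<lambda>y. return (M \<Otimes>\<^sub>M B) (x, y))))"
    by (rule prob_space_bind'[OF Ms inner])
  show "sets (M \<bind> (\<lambda>x. N x \<bind> (\<lambda>y. return (M \<Otimes>\<^sub>M B) (x, y)))) = sets (M \<Otimes>\<^sub>M B)"
    by (rule sets_bind'[OF Ms inner])
qed

lemma epow_exp: "epow (ennreal (exp a)) p = ennreal (exp (p * a))"
  by (simp add: epow_ennreal powr_def)

theorem lemma4:
  fixes k n :: nat
    and edge :: "nat \<Rightarrow> nat \<Rightarrow> nat"
    and X :: "nat \<Rightarrow> 'a::metric_space set"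
    and \<rho> :: "nat \<Rightarrow> 'a measure"
    and K :: "(nat \<Rightarrow> 'a) \<Rightarrow> real measure"
    and f :: "(nat \<Rightarrow> 'a) \<Rightarrow> real"
    and w :: "nat \<Rightarrow> real"
    and M \<epsilon> :: real
  assumes k_pos: "0 < k"
    and distinct_edges: "\<forall>i<n. \<forall>i'<n. (\<forall>j<k. edge i j = edge i' j) \<longrightarrow> i = i'"
    and X_compact: "\<forall>j<k. compact (X j)"
    and rho_sets: "\<forall>j<k. sets (\<rho> j) = sets (restrict_space borel (X j))"
    and rho_prob: "\<forall>j<k. prob_space (\<rho> j)"
    and K_kernel: "K \<in> measurable (feat_measure k \<rho>) (prob_algebra borel)"
    and f_meas: "f \<in> borel_measurable (feat_measure k \<rho>)"
    and M_pos: "0 < M"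
    and f_bounded: "AE z in joint_measure k \<rho> K. \<bar>f (fst z) - snd z\<bar> \<le> M"
    and w_opt: "optimal_weighting k n edge w"
    and eps_pos: "0 < \<epsilon>"
  shows "measure (sample_measure k n edge \<rho> K)
           {\<omega> \<in> space (sample_measure k n edge \<rho> K).
              expected_risk k \<rho> K f - weighted_emp_risk k n edge w f \<omega> \<ge> - \<epsilon>}
         \<ge> 1 - exp (- (s_number k n edge * \<epsilon>\<^sup>2) / (2 * M ^ 4))"
proof -
  define Vs where "Vs = vset k n edge"
  define FM where "FM = feat_measure k \<rho>"
  define Vm where "Vm = vertex_feat_measure k n edge \<rho>"
  define Lb where "Lb = PiM {..<n} (\<lambda>_. borel :: real measure)"
  define xv where "xv i = (xvec k edge i :: (nat \<times> nat \<Rightarrow> 'a) \<Rightarrow> (nat \<Rightarrow> 'a))" for i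
  define s where "s = s_number k n edge"
  define \<mu> where "\<mu> = expected_risk k \<rho> K f"
  define l where "l x y = (f x - y)\<^sup>2" for x y
  define Ky where "Ky \<Phi> = PiM {..<n} (\<lambda>i. K (xv i \<Phi>))" for \<Phi>
  define SM where "SM = sample_measure k n edge \<rho> K"
  define JM where "JM = joint_measure k \<rho> K"
  define I where "I = {i. i < n \<and> 0 < w i}"
  define \<rho>2 where "\<rho>2 (jv::nat \<times> nat) = (if fst jv < k then \<rho> (fst jv) else return (count_space UNIV) undefined)" for jv
  have feas: "feasible_weighting k n edge w" and s_eq: "(\<Sum>i<n. w i) = s"
    using w_opt by (auto simp: optimal_weighting_def s_def)
  have w_nn: "\<And>i. i < n \<Longrightarrow> 0 \<le> w i" using feas by (simp add: feasible_weighting_def)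
  have w_load: "\<And>j u. j < k \<Longrightarrow> (\<Sum>i\<in>{i. i < n \<and> edge i j = u}. w i) \<le> 1"
    using feas by (simp add: feasible_weighting_def)
  have Vs_fst: "\<And>jv. jv \<in> Vs \<Longrightarrow> fst jv < k" by (auto simp: Vs_def vset_def)
  have edge_Vs: "\<And>i j. i < n \<Longrightarrow> j < k \<Longrightarrow> (j, edge i j) \<in> Vs" by (auto simp: Vs_def vset_def)
  have finVs: "finite Vs"
  proof -
    have "Vs = (\<lambda>(i, j). (j, edge i j)) ` ({..<n} \<times> {..<k})" by (auto simp: Vs_def vset_def)
    then show ?thesis by simp
  qed
  have \<rho>2_prob: "\<And>jv. prob_space (\<rho>2 jv)"
    using rho_prob by (auto simp: \<rho>2_def intro: prob_space_return)
  have Vm_eq: "Vm = PiM Vs \<rho>2"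
    unfolding Vm_def vertex_feat_measure_def Vs_def[symmetric] using Vs_fst by (intro PiM_cong) (auto simp: \<rho>2_def)
  have Vm_prob: "prob_space Vm" unfolding Vm_eq by (rule prob_space_PiM[OF \<rho>2_prob])
  have FM_eq: "FM = PiM {..<k} \<rho>" by (simp add: FM_def feat_measure_def)
  have xv_meas: "xv i \<in> Vm \<rightarrow>\<^sub>M FM" if i: "i < n" for i
    unfolding xv_def xvec_def FM_eq Vm_def vertex_feat_measure_def Vs_def[symmetric]
  proof (rule measurable_restrict)
    fix j assume "j \<in> {..<k}"
    then have "(j, edge i j) \<in> Vs" using edge_Vs i by simp
    from measurable_component_singleton[OF this, of "\<lambda>jv. \<rho> (fst jv)"]
    show "(\<lambda>\<Phi>. \<Phi> (j, edge i j)) \<in> PiM Vs (\<lambda>jv. \<rho> (fst jv)) \<rightarrow>\<^sub>M \<rho> j" by simp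
  qed
  have K_meas: "K \<in> FM \<rightarrow>\<^sub>M prob_algebra borel" using K_kernel by (simp add: FM_def)
  have Ky_meas: "Ky \<in> Vm \<rightarrow>\<^sub>M prob_algebra Lb"
    unfolding Ky_def Lb_def
    by (rule measurable_PiM_kernel) (auto intro: measurable_compose[OF xv_meas K_meas])
  have SM_eq: "SM = Vm \<bind> (\<lambda>\<Phi>. Ky \<Phi> \<bind> (\<lambda>Y. return (Vm \<Otimes>\<^sub>M Lb) (\<Phi>, Y)))"
    by (simp add: SM_def sample_measure_def Vm_def Ky_def Lb_def xv_def)
  have JM_eq: "JM = FM \<bind> (\<lambda>x. K x \<bind> (\<lambda>y. return (FM \<Otimes>\<^sub>M borel) (x, y)))"
    by (simp add: JM_def joint_measure_def FM_def)
  have SM_prob: "prob_space SM" and SM_sets: "sets SM = sets (Vm \<Otimes>\<^sub>M Lb)"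
    unfolding SM_eq using prob_space_bind_pair[OF Ky_meas Vm_prob] by auto
  have FM_prob: "prob_space FM" unfolding FM_eq using rho_prob by (intro prob_space_PiM) auto
  have JM_prob: "prob_space JM" and JM_sets: "sets JM = sets (FM \<Otimes>\<^sub>M borel)"
    unfolding JM_eq using prob_space_bind_pair[OF K_meas FM_prob] by auto
  interpret SMp: prob_space SM by (rule SM_prob)
  interpret JMp: prob_space JM by (rule JM_prob)
  have f_meas': "f \<in> borel_measurable FM" using f_meas by (simp add: FM_def)
  have loss_meas: "(\<lambda>\<omega>. l (xv i (fst \<omega>)) (snd \<omega> i)) \<in> borel_measurable (Vm \<Otimes>\<^sub>M Lb)" if i: "i < n" for i
  proof -
    have a[measurable]: "(\<lambda>\<omega>. f (xv i (fst \<omega>))) \<in> borel_measurable (Vm \<Otimes>\<^sub>M Lb)"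
      using measurable_compose[OF measurable_compose[OF measurable_fst xv_meas[OF i]] f_meas'] .
    have b[measurable]: "(\<lambda>\<omega>. snd \<omega> i) \<in> borel_measurable (Vm \<Otimes>\<^sub>M Lb)"
      using measurable_compose[OF measurable_snd measurable_component_singleton[of i "{..<n}" "\<lambda>_. borel"]] i
      unfolding Lb_def by simp
    show ?thesis unfolding l_def by measurable
  qed
  define T where "T \<omega> = (\<Sum>i\<in>I. w i * l (xv i (fst \<omega>)) (snd \<omega> i))" for \<omega>
  have T_meas: "T \<in> borel_measurable (Vm \<Otimes>\<^sub>M Lb)"
    unfolding T_def by (intro borel_measurable_sum borel_measurable_times measurable_const loss_meas) (auto simp: I_def)
  have I_sub: "I \<subseteq> {..<n}" by (auto simp: I_def)
  have finI: "finite I" using I_sub finite_subset by blast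
  have sI: "(\<Sum>i\<in>I. w i) = s"
  proof -
    have "(\<Sum>i\<in>I. w i) = (\<Sum>i<n. w i)"
      using w_nn by (intro sum.mono_neutral_left) (auto simp: I_def not_less intro: order_antisym)
    then show ?thesis using s_eq by simp
  qed
  have emp_eq: "weighted_emp_risk k n edge w f \<omega> = T \<omega> / s" for \<omega>
  proof -
    have "(\<Sum>i<n. w i * (f (xvec k edge i (fst \<omega>)) - snd \<omega> i)\<^sup>2) = T \<omega>"
      unfolding T_def l_def xv_def
      using w_nn by (intro sum.mono_neutral_right) (auto simp: I_def not_less intro: order_antisym)
    then show ?thesis by (simp add: weighted_emp_risk_def s_def)
  qed
  define E where "E = {\<omega> \<in> space SM. \<mu> - weighted_emp_risk k n edge w f \<omega> \<ge> - \<epsilon>}"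
  have E_sets: "E \<in> sets SM"
  proof -
    have "E = {\<omega> \<in> space SM. \<mu> - T \<omega> / s \<ge> - \<epsilon>}" by (simp add: E_def emp_eq)
    also have "\<dots> \<in> sets SM"
      using T_meas by (simp add: measurable_cong_sets[OF SM_sets refl, symmetric])
    finally show ?thesis .
  qed
  have s_nn: "0 \<le> s" using s_eq w_nn by (metis lessThan_iff sum_nonneg)
  show ?thesis
  proof (cases "s = 0")
    case True
    then show ?thesis by (simp add: s_def[symmetric])
  next
    case False
    with s_nn have s_pos: "0 < s" by simp
    define lam where "lam = 4 * \<epsilon> / M^4"
    have lam_pos: "0 < lam" using eps_pos M_pos by (simp add: lam_def)
    define U where "U x = (\<integral>\<^sup>+y. ennreal (exp (lam * l x y)) \<partial>K x)" for x
    define A where "A = (\<integral>\<^sup>+z. ennreal (exp (lam * l (fst z) (snd z))) \<partial>JM)"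
    define C0 where "C0 = exp (lam * \<mu> + lam^2 * M^4 / 8)"
    note f_meas'[measurable]
    have h_meas: "(\<lambda>z. ennreal (exp (lam * l (fst z) (snd z)))) \<in> borel_measurable (FM \<Otimes>\<^sub>M borel)"
      unfolding l_def by measurable
    have U_meas: "U \<in> borel_measurable FM"
      unfolding U_def
      by (rule nn_integral_measurable_subprob_algebra2[OF _ measurable_prob_algebraD[OF K_meas]])
         (use h_meas in \<open>simp add: case_prod_beta'\<close>)
    have w_le1: "w i \<le> 1" if i: "i < n" for i
    proof -
      have "w i \<le> (\<Sum>i'\<in>{i'. i' < n \<and> edge i' 0 = edge i 0}. w i')"
        using i w_nn by (intro member_le_sum) auto
      also have "\<dots> \<le> 1" using w_load[OF k_pos] .
      finally show ?thesis .
    qed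
    have STEP1: "(\<integral>\<^sup>+\<omega>. ennreal (exp (lam * T \<omega>)) \<partial>SM)
        = (\<integral>\<^sup>+\<Phi>. \<integral>\<^sup>+Y. ennreal (exp (lam * T (\<Phi>, Y))) \<partial>Ky \<Phi> \<partial>Vm)"
      unfolding SM_eq by (rule nn_integral_bind_pair[OF Ky_meas]) (use T_meas in measurable)
    have STEP2: "(\<integral>\<^sup>+Y. ennreal (exp (lam * T (\<Phi>, Y))) \<partial>Ky \<Phi>) \<le> (\<Prod>i\<in>I. epow (U (xv i \<Phi>)) (w i))"
      if \<Phi>: "\<Phi> \<in> space Vm" for \<Phi>
    proof -
      have Kx: "prob_space (K (xv i \<Phi>))" "sets (K (xv i \<Phi>)) = sets borel" if i: "i < n" for i
        using measurable_space[OF K_meas measurable_space[OF xv_meas[OF i] \<Phi>]]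
        unfolding space_prob_algebra mem_Collect_eq by blast+
      define F where "F i y = ennreal (exp (lam * (if i \<in> I then w i * l (xv i \<Phi>) y else 0)))" for i y
      have F_meas: "F i \<in> borel_measurable (K (xv i \<Phi>))" if i: "i < n" for i
        unfolding measurable_cong_sets[OF Kx(2)[OF i] refl] F_def l_def by measurable
      have "(\<integral>\<^sup>+Y. ennreal (exp (lam * T (\<Phi>, Y))) \<partial>Ky \<Phi>) = (\<integral>\<^sup>+Y. (\<Prod>i<n. F i (Y i)) \<partial>Ky \<Phi>)"
      proof (intro nn_integral_cong)
        fix Y :: "nat \<Rightarrow> real"
        have "T (\<Phi>, Y) = (\<Sum>i<n. if i \<in> I then w i * l (xv i \<Phi>) (Y i) else 0)"
          unfolding T_def using sum.inter_restrict[of "{..<n}" "\<lambda>i. w i * l (xv i \<Phi>) (Y i)" I] I_sub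
          by (simp add: Int_absorb1)
        then have "exp (lam * T (\<Phi>, Y)) = (\<Prod>i<n. exp (lam * (if i \<in> I then w i * l (xv i \<Phi>) (Y i) else 0)))"
          by (simp add: sum_distrib_left exp_sum)
        then show "ennreal (exp (lam * T (\<Phi>, Y))) = (\<Prod>i<n. F i (Y i))"
          unfolding F_def by (simp add: prod_ennreal)
      qed
      also have "\<dots> = (\<Prod>i<n. \<integral>\<^sup>+y. F i y \<partial>K (xv i \<Phi>))"
        unfolding Ky_def by (rule nn_integral_PiM_prod') (auto intro: Kx F_meas)
      also have "\<dots> \<le> (\<Prod>i<n. (if i \<in> I then epow (U (xv i \<Phi>)) (w i) else 1))"
      proof (intro prod_mono_ennreal)
        fix i assume "i \<in> {..<n}"
        then have i: "i < n" by simp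
        interpret Kp: prob_space "K (xv i \<Phi>)" by (rule Kx(1)[OF i])
        show "(\<integral>\<^sup>+y. F i y \<partial>K (xv i \<Phi>)) \<le> (if i \<in> I then epow (U (xv i \<Phi>)) (w i) else 1)"
        proof (cases "i \<in> I")
          case True
          have gm: "(\<lambda>y. ennreal (exp (lam * l (xv i \<Phi>) y))) \<in> borel_measurable (K (xv i \<Phi>))"
            unfolding measurable_cong_sets[OF Kx(2)[OF i] refl] l_def by measurable
          have "(\<integral>\<^sup>+y. F i y \<partial>K (xv i \<Phi>))
              = (\<integral>\<^sup>+y. (\<Prod>j\<in>{i}. epow (ennreal (exp (lam * l (xv i \<Phi>) y))) (w j)) \<partial>K (xv i \<Phi>))"
            using True by (intro nn_integral_cong) (simp add: F_def epow_exp algebra_simps)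
          also have "\<dots> \<le> (\<Prod>j\<in>{i}. epow (\<integral>\<^sup>+y. ennreal (exp (lam * l (xv i \<Phi>) y)) \<partial>K (xv i \<Phi>)) (w j))"
            using True w_le1[OF i] gm by (intro holder_gen Kx(1)[OF i]) (auto simp: I_def)
          also have "\<dots> = epow (U (xv i \<Phi>)) (w i)" by (simp add: U_def)
          finally show ?thesis using True by simp
        next
          case False
          then show ?thesis by (simp add: F_def Kp.emeasure_space_1)
        qed
      qed
      also have "\<dots> = (\<Prod>i\<in>I. epow (U (xv i \<Phi>)) (w i))"
        using prod.inter_restrict[of "{..<n}" "\<lambda>i. epow (U (xv i \<Phi>)) (w i)" I] I_sub
        by (simp add: Int_absorb1)
      finally show ?thesis .
    qed
    have STEP3: "(\<integral>\<^sup>+\<Phi>. (\<Prod>i\<in>I. epow (U (xv i \<Phi>)) (w i)) \<partial>Vm) \<le> (\<Prod>i\<in>I. epow (\<integral>\<^sup>+\<Phi>. U (xv i \<Phi>) \<partial>Vm) (w i))"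
      unfolding Vm_eq
    proof (rule finner[OF \<rho>2_prob finVs finI, where e="\<lambda>i. {(j, edge i j) | j. j < k}"])
      show "\<And>i. i \<in> I \<Longrightarrow> 0 < w i" by (simp add: I_def)
    next
      fix v assume v: "v \<in> Vs"
      obtain j u where vju: "v = (j, u)" by (cases v)
      have j: "j < k" using Vs_fst[OF v] vju by simp
      have "{i \<in> I. v \<in> {(j, edge i j) |j. j < k}} = {i \<in> I. edge i j = u}" using vju j by auto
      then have "(\<Sum>i\<in>{i \<in> I. v \<in> {(j, edge i j) |j. j < k}}. w i) = (\<Sum>i\<in>{i \<in> I. edge i j = u}. w i)" by simp
      also have "\<dots> \<le> (\<Sum>i\<in>{i. i < n \<and> edge i j = u}. w i)"
        using w_nn by (intro sum_mono2) (auto simp: I_def)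
      also have "\<dots> \<le> 1" using w_load[OF j] .
      finally show "(\<Sum>i\<in>{i \<in> I. v \<in> {(j, edge i j) |j. j < k}}. w i) \<le> 1" .
    next
      fix i assume i: "i \<in> I"
      then have "i < n" by (simp add: I_def)
      show "(\<lambda>\<Phi>. U (xv i \<Phi>)) \<in> borel_measurable (PiM Vs \<rho>2)"
        unfolding Vm_eq[symmetric] by (rule measurable_compose[OF xv_meas[OF \<open>i < n\<close>] U_meas])
    next
      fix i and x y :: "nat \<times> nat \<Rightarrow> 'a"
      assume "i \<in> I" "x \<in> space (PiM Vs \<rho>2)" "y \<in> space (PiM Vs \<rho>2)" and agree: "\<And>u. u \<in> {(j, edge i j) |j. j < k} \<Longrightarrow> x u = y u"
      have "xv i x = xv i y" unfolding xv_def xvec_def using agree by (intro ext) auto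
      then show "U (xv i x) = U (xv i y)" by simp
    qed
    have STEP4: "(\<integral>\<^sup>+\<Phi>. U (xv i \<Phi>) \<partial>Vm) = (\<integral>\<^sup>+x. U x \<partial>FM)" if i: "i < n" for i
    proof -
      have d: "distr (PiM Vs \<rho>2) (PiM {..<k} (\<lambda>j. \<rho>2 (j, edge i j))) (\<lambda>\<omega>. \<lambda>j\<in>{..<k}. \<omega> (j, edge i j))
          = PiM {..<k} (\<lambda>j. \<rho>2 (j, edge i j))"
        by (rule distr_PiM_reindex) (auto simp: \<rho>2_prob inj_on_def edge_Vs[OF i])
      have e: "PiM {..<k} (\<lambda>j. \<rho>2 (j, edge i j)) = FM"
        unfolding FM_eq by (rule PiM_cong) (auto simp: \<rho>2_def)
      have "distr Vm FM (xv i) = FM"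
        using d unfolding e Vm_eq[symmetric] by (simp add: xv_def xvec_def[abs_def])
      then have "(\<integral>\<^sup>+x. U x \<partial>FM) = (\<integral>\<^sup>+x. U x \<partial>distr Vm FM (xv i))" by simp
      also have "\<dots> = (\<integral>\<^sup>+\<Phi>. U (xv i \<Phi>) \<partial>Vm)"
        by (rule nn_integral_distr[OF xv_meas[OF i]]) (simp add: U_meas)
      finally show ?thesis by simp
    qed
    have STEP5: "(\<integral>\<^sup>+x. U x \<partial>FM) = A"
      unfolding A_def JM_eq U_def by (subst nn_integral_bind_pair[OF K_meas h_meas]) simp
    have STEP6: "A \<le> ennreal C0"
    proof -
      define L where "L z = l (fst z) (snd z)" for z :: "(nat \<Rightarrow> 'a) \<times> real"
      have L_meas: "L \<in> borel_measurable JM"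
        unfolding measurable_cong_sets[OF JM_sets refl] L_def l_def by measurable
      have AEL: "AE z in JM. L z \<in> {0..M^2}"
        using f_bounded unfolding JM_def[symmetric]
      proof eventually_elim
        case (elim z)
        have "\<bar>f (fst z) - snd z\<bar>^2 \<le> M^2" using elim by (intro power_mono) auto
        then show ?case by (simp add: L_def l_def)
      qed
      interpret H: interval_bounded_random_variable JM L 0 "M^2"
        by unfold_locales (use L_meas AEL in auto)
      have muL: "integral\<^sup>L JM L = \<mu>"
        unfolding L_def[abs_def] l_def by (simp add: \<mu>_def expected_risk_def JM_def[symmetric])
      have H1: "(\<integral>\<^sup>+z. ennreal (exp (lam * (L z - \<mu>))) \<partial>JM) \<le> ennreal (exp (lam^2 * M^4 / 8))"
        using H.Hoeffdings_lemma_nn_integral[OF lam_pos] unfolding muL by (simp add: power_mult[symmetric])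
      have "A = (\<integral>\<^sup>+z. ennreal (exp (lam * \<mu>)) * ennreal (exp (lam * (L z - \<mu>))) \<partial>JM)"
        unfolding A_def
        by (intro nn_integral_cong) (simp add: L_def ennreal_mult[symmetric] exp_add[symmetric] algebra_simps)
      also have "\<dots> = ennreal (exp (lam * \<mu>)) * (\<integral>\<^sup>+z. ennreal (exp (lam * (L z - \<mu>))) \<partial>JM)"
        using L_meas by (intro nn_integral_cmult) measurable
      also have "\<dots> \<le> ennreal (exp (lam * \<mu>)) * ennreal (exp (lam^2 * M^4 / 8))"
        by (intro mult_left_mono H1) simp
      also have "\<dots> = ennreal C0" by (simp add: C0_def ennreal_mult[symmetric] exp_add[symmetric])
      finally show ?thesis .
    qed
    have STEP7: "(\<Prod>i\<in>I. epow A (w i)) \<le> ennreal (exp (s * (lam * \<mu> + lam^2 * M^4 / 8)))"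
    proof -
      have C0pos: "0 < C0" by (simp add: C0_def)
      have "(\<Prod>i\<in>I. epow A (w i)) \<le> (\<Prod>i\<in>I. epow (ennreal C0) (w i))"
        using STEP6 w_nn I_sub by (intro prod_mono_ennreal epow_mono) auto
      also have "\<dots> = (\<Prod>i\<in>I. ennreal (C0 powr w i))"
        using C0pos by (intro prod.cong refl) (simp add: epow_ennreal)
      also have "\<dots> = ennreal (\<Prod>i\<in>I. C0 powr w i)" by (rule prod_ennreal) simp
      also have "(\<Prod>i\<in>I. C0 powr w i) = C0 powr s"
        using C0pos sI by (simp add: powr_sum[symmetric])
      also have "C0 powr s = exp (s * (lam * \<mu> + lam^2 * M^4 / 8))"
        using C0pos by (simp add: powr_def C0_def)
      finally show ?thesis .
    qed
    have MAIN: "(\<integral>\<^sup>+\<omega>. ennreal (exp (lam * T \<omega>)) \<partial>SM) \<le> ennreal (exp (s * (lam * \<mu> + lam^2 * M^4 / 8)))"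
    proof -
      have "(\<integral>\<^sup>+\<omega>. ennreal (exp (lam * T \<omega>)) \<partial>SM) \<le> (\<integral>\<^sup>+\<Phi>. (\<Prod>i\<in>I. epow (U (xv i \<Phi>)) (w i)) \<partial>Vm)"
        unfolding STEP1 by (intro nn_integral_mono STEP2)
      also have "\<dots> \<le> (\<Prod>i\<in>I. epow (\<integral>\<^sup>+\<Phi>. U (xv i \<Phi>) \<partial>Vm) (w i))" by (rule STEP3)
      also have "\<dots> = (\<Prod>i\<in>I. epow A (w i))"
        using I_sub by (intro prod.cong refl) (auto simp: STEP4 STEP5)
      also have "\<dots> \<le> ennreal (exp (s * (lam * \<mu> + lam^2 * M^4 / 8)))" by (rule STEP7)
      finally show ?thesis .
    qed
    define Bad where "Bad = space SM - E"
    have Bad_sets: "Bad \<in> sets SM" unfolding Bad_def using E_sets by auto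
    define X where "X = - (lam * s * (\<mu> + \<epsilon>)) + s * (lam * \<mu> + lam^2 * M^4 / 8)"
    have bad: "emeasure SM Bad \<le> ennreal (exp X)"
    proof -
      have T_meas': "T \<in> borel_measurable SM" using T_meas by (simp add: measurable_cong_sets[OF SM_sets refl])
      have "emeasure SM Bad = (\<integral>\<^sup>+\<omega>. indicator Bad \<omega> \<partial>SM)" using Bad_sets by simp
      also have "\<dots> \<le> (\<integral>\<^sup>+\<omega>. ennreal (exp (- (lam * s * (\<mu> + \<epsilon>)))) * ennreal (exp (lam * T \<omega>)) \<partial>SM)"
      proof (intro nn_integral_mono)
        fix \<omega> assume \<omega>: "\<omega> \<in> space SM"
        show "indicator Bad \<omega> \<le> ennreal (exp (- (lam * s * (\<mu> + \<epsilon>)))) * ennreal (exp (lam * T \<omega>))"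
        proof (cases "\<omega> \<in> Bad")
          case True
          then have "\<not> (\<mu> - T \<omega> / s \<ge> - \<epsilon>)" by (simp add: Bad_def E_def emp_eq)
          then have "\<mu> + \<epsilon> < T \<omega> / s" by simp
          then have "s * (\<mu> + \<epsilon>) < T \<omega>" using s_pos by (simp add: field_simps)
          then have "lam * (s * (\<mu> + \<epsilon>)) \<le> lam * T \<omega>" using lam_pos by simp
          then have "1 \<le> exp (- (lam * s * (\<mu> + \<epsilon>)) + lam * T \<omega>)" by simp
          then have "1 \<le> ennreal (exp (- (lam * s * (\<mu> + \<epsilon>)) + lam * T \<omega>))" by simp
          then show ?thesis using True by (simp add: ennreal_mult[symmetric] exp_add[symmetric])
        qed simp
      qed
      also have "\<dots> = ennreal (exp (- (lam * s * (\<mu> + \<epsilon>)))) * (\<integral>\<^sup>+\<omega>. ennreal (exp (lam * T \<omega>)) \<partial>SM)"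
        using T_meas' by (intro nn_integral_cmult) measurable
      also have "\<dots> \<le> ennreal (exp (- (lam * s * (\<mu> + \<epsilon>)))) * ennreal (exp (s * (lam * \<mu> + lam^2 * M^4 / 8)))"
        by (intro mult_left_mono MAIN) simp
      also have "\<dots> = ennreal (exp X)"
        by (simp add: ennreal_mult[symmetric] exp_add[symmetric] X_def)
      finally show ?thesis .
    qed
    have X_le: "X \<le> - (s * \<epsilon>\<^sup>2) / (2 * M ^ 4)"
    proof -
      have lM: "lam * M^4 = 4 * \<epsilon>" using M_pos by (simp add: lam_def)
      have "X = s * lam * (lam * M^4 / 8 - \<epsilon>)" by (simp add: X_def algebra_simps power2_eq_square)
      also have "\<dots> = - (s * lam * \<epsilon> / 2)" by (simp add: lM algebra_simps)
      also have "\<dots> = - 2 * (s * \<epsilon>\<^sup>2 / M^4)" using M_pos by (simp add: lam_def power2_eq_square field_simps)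
      also have "\<dots> \<le> - (s * \<epsilon>\<^sup>2 / M^4) / 2"
      proof -
        have "0 \<le> s * \<epsilon>\<^sup>2 / M^4" using s_pos M_pos by simp
        moreover have "\<And>t::real. 0 \<le> t \<Longrightarrow> - 2 * t \<le> - t / 2" by linarith
        ultimately show ?thesis by blast
      qed
      finally show ?thesis by simp
    qed
    have "measure SM Bad \<le> exp X"
      using bad by (simp add: SMp.emeasure_eq_measure)
    then have "measure SM E \<ge> 1 - exp X"
      using SMp.prob_compl[OF E_sets] by (simp add: Bad_def)
    moreover have "exp X \<le> exp (- (s * \<epsilon>\<^sup>2) / (2 * M ^ 4))" using X_le by simp
    ultimately have "measure SM E \<ge> 1 - exp (- (s * \<epsilon>\<^sup>2) / (2 * M ^ 4))" by linarith
    then show ?thesis unfolding E_def SM_def \<mu>_def s_def .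
  qed
qed

end
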